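(* Under the setting below (with $q<q_c$ and $\hat{q}<q_c$), the certainty-equivalence controller $\hat{u}_t=\hat{K}x_t$ with $\hat{K}=-(R+B^{\top}\hat{P}B)^{-1}B^{\top}\hat{P}A$ mean-square stabilizes the system $x_{t+1}=Ax_t+\lambda_tBu_t$ if $q$ and $\hat{q}$ satisfy $$Q+(1-q)\hat{K}^{\top}R\hat{K}-(q-\hat{q})A^{\top}\hat{P}B(R+B^{\top}\hat{P}B)^{-1}B^{\top}\hat{P}A>0,$$ where $\hat{P}$ is the positive definite solution of $\hat{P}=Q+A^{\top}\hat{P}A-(1-\hat{q})A^{\top}\hat{P}B(R+B^{\top}\hat{P}B)^{-1}B^{\top}\hat{P}A$. Moreover, if $\hat{q}\ge q$, this matrix inequality always holds.
   Context: Consider the discrete-time system $x_{t+1}=Ax_t+\lambda_tBu_t$, $t=0,1,2,\dots$, with $x_t\in\mathbb{R}^n$, $u_t\in\mathbb{R}^m$, $x_0$ having finite mean and variance, and $\{\lambda_t\}$ i.i.d. Bernoulli random variables with $\lambda_t=0$ with probability $q\in(0,1)$ (packet loss) and $\lambda_t=1$ with probability $1-q$. The cost is $J(x_0,\mathbf{u})=\mathbb{E}\{\sum_{t=0}^\infty x_t^{\top}Qx_t+\lambda_tu_t^{\top}Ru_t\}$ with $Q,R$ positive definite, and $(A,B)$ is stabilizable. Assume $q<q_c$, where $q_c$ is the critical loss probability guaranteeing existence of a positive definite solution $P$ to the modified Riccati equation $P=Q+A^{\top}PA-(1-q)A^{\top}PB(R+B^{\top}PB)^{-1}B^{\top}PA$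 (with $1/\prod_i|\lambda_i^u(A)|^2\le q_c\le 1/\max_i|\lambda_i^u(A)|^2$, $\lambda_i^u(A)$ the unstable eigenvalues of $A$). The unknown $q$ is estimated by $\hat{q}=\frac{1}{N_q}\sum_{i=1}^{N_q}(1-\lambda_i)$ from channel samples, and it is assumed that $\hat{q}<q_c$. The system is mean-square stable if $\lim_{t\to\infty}\mathbb{E}\{x_t^{\top}x_t\}=0$. *)

theory Defs
  imports "HOL-Probability.Probability"
begin

definition posdef :: "real^'n^'n \<Rightarrow> bool" where
  "posdef P \<longleftrightarrow> transpose P = P \<and> (\<forall>x. x \<noteq> 0 \<longrightarrow> x \<bullet> (P *v x) > 0)"

definition cmat :: "real^'n^'n \<Rightarrow> complex^'n^'n" where
  "cmat A = (\<chi> i j. complex_of_real (A $ i $ j))"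

definition schur_stable :: "real^'n^'n \<Rightarrow> bool" where
  "schur_stable A \<longleftrightarrow> (\<forall>z::complex. det (mat z - cmat A) = 0 \<longrightarrow> cmod z < 1)"

definition stabilizable :: "real^'n^'n \<Rightarrow> real^'m^'n \<Rightarrow> bool" where
  "stabilizable A B \<longleftrightarrow> (\<exists>K::real^'n^'m. schur_stable (A + B ** K))"

definition ric :: "real \<Rightarrow> real^'n^'n \<Rightarrow> real^'m^'n \<Rightarrow> real^'n^'n \<Rightarrow> real^'m^'m
                   \<Rightarrow> real^'n^'n \<Rightarrow> real^'n^'n" where
  "ric q A B Q R P = Q + transpose A ** P ** A
     - (1 - q) *\<^sub>R (transpose A ** P ** B ** matrix_inv (R + transpose B ** P ** B)
                      ** transpose B ** P ** A)"

definition qcrit :: "real^'n^'n \<Rightarrow> real^'m^'n \<Rightarrow> real^'n^'n \<Rightarrow> real^'m^'m \<Rightarrow> real" where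
  "qcrit A B Q R = Sup {r. 0 \<le> r \<and> r \<le> 1 \<and>
      (\<forall>q. 0 \<le> q \<and> q < r \<longrightarrow> (\<exists>P. posdef P \<and> P = ric q A B Q R P))}"

definition gain :: "real^'n^'n \<Rightarrow> real^'m^'n \<Rightarrow> real^'m^'m \<Rightarrow> real^'n^'n \<Rightarrow> real^'n^'m" where
  "gain A B R P = - (matrix_inv (R + transpose B ** P ** B) ** transpose B ** P ** A)"

fun traj :: "real^'n^'n \<Rightarrow> real^'m^'n \<Rightarrow> real^'n^'m \<Rightarrow> (nat \<Rightarrow> 'a \<Rightarrow> real)
             \<Rightarrow> ('a \<Rightarrow> real^'n) \<Rightarrow> nat \<Rightarrow> 'a \<Rightarrow> real^'n" where
  "traj A B K lam x0 0 w = x0 w"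
| "traj A B K lam x0 (Suc t) w =
     A *v traj A B K lam x0 t w + lam t w *\<^sub>R (B *v (K *v traj A B K lam x0 t w))"

end

theory Submission
  imports Defs
begin


lemma dot_mv_transpose: fixes M :: "real^'n^'m" shows "(M *v x) \<bullet> y = x \<bullet> (transpose M *v y)"
  by (metis dot_lmul_matrix vector_transpose_matrix)

lemma mv_scaleR: fixes M :: "real^'n^'m" shows "M *v (a *\<^sub>R x) = a *\<^sub>R (M *v x)"
  by (simp add: vec_eq_iff matrix_vector_mult_def sum_distrib_left algebra_simps)

lemma posdef_lb:
  fixes W :: "real^'n^'n"
  assumes "posdef W" shows "\<exists>c>0. \<forall>x. c * (x \<bullet> x) \<le> x \<bullet> (W *v x)"
proof -
  have cont: "continuous_on (sphere (0::real^'n) 1) (\<lambda>x. x \<bullet> (W *v x))"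
    by (intro continuous_intros linear_continuous_on matrix_vector_mul_bounded_linear)
  have ne: "sphere (0::real^'n) 1 \<noteq> {}" by simp
  obtain u where u: "u \<in> sphere 0 1" and umin: "\<forall>y\<in>sphere 0 1. u \<bullet> (W *v u) \<le> y \<bullet> (W *v y)"
    using continuous_attains_inf[OF compact_sphere ne cont] by blast
  have "u \<noteq> 0" using u by auto
  then have cpos: "u \<bullet> (W *v u) > 0" using assms unfolding posdef_def by blast
  show ?thesis
  proof (intro exI[of _ "u \<bullet> (W *v u)"] conjI allI cpos)
    fix x :: "real^'n"
    show "u \<bullet> (W *v u) * (x \<bullet> x) \<le> x \<bullet> (W *v x)"
    proof (cases "x = 0")
      case True then show ?thesis by simp
    next
      case False
      define v where "v = (1 / norm x) *\<^sub>R x"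
      have v: "v \<in> sphere 0 1" using False by (simp add: v_def)
      have xv: "x = norm x *\<^sub>R v" using False by (simp add: v_def)
      have "x \<bullet> (W *v x) = (norm x)^2 * (v \<bullet> (W *v v))"
        by (subst (1 2) xv) (simp add: mv_scaleR power2_eq_square)
      moreover have "x \<bullet> x = (norm x)^2" by (simp add: power2_norm_eq_inner)
      moreover have "u \<bullet> (W *v u) \<le> v \<bullet> (W *v v)" using umin v by blast
      ultimately show ?thesis by (simp add: mult_right_mono mult.commute)
    qed
  qed
qed

lemma quad_ub:
  fixes M :: "real^'n^'n" shows "\<exists>C>0. \<forall>x. \<bar>x \<bullet> (M *v x)\<bar> \<le> C * (x \<bullet> x)"
proof -
  obtain K where K: "K > 0" "\<And>x. norm (M *v x) \<le> norm x * K"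
    using bounded_linear.pos_bounded[OF matrix_vector_mul_bounded_linear[of M]] by blast
  show ?thesis
  proof (intro exI[of _ K] conjI allI K(1))
    fix x :: "real^'n"
    have "\<bar>x \<bullet> (M *v x)\<bar> \<le> norm x * norm (M *v x)" by (rule Cauchy_Schwarz_ineq2)
    also have "\<dots> \<le> norm x * (norm x * K)" by (rule mult_left_mono[OF K(2)]) simp
    also have "\<dots> = K * (x \<bullet> x)" by (simp add: power2_norm_eq_inner[symmetric] power2_eq_square)
    finally show "\<bar>x \<bullet> (M *v x)\<bar> \<le> K * (x \<bullet> x)" .
  qed
qed

lemma transpose_add': "transpose (X + Y) = transpose X + transpose (Y :: real^'n^'m)"
  by (simp add: transpose_def vec_eq_iff)
lemma transpose_diff': "transpose (X - Y) = transpose X - transpose (Y :: real^'n^'m)"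
  by (simp add: transpose_def vec_eq_iff)
lemma transpose_neg': "transpose (- X) = - transpose (X :: real^'n^'m)"
  by (simp add: transpose_def vec_eq_iff)
lemma neg_mv: "(- X) *v x = - (X *v (x :: real^'n))"
  by (simp add: matrix_vector_mult_def vec_eq_iff sum_negf)
lemma scaleR_mv: "(c *\<^sub>R X) *v x = c *\<^sub>R (X *v (x :: real^'n))"
  by (simp add: scaleR_matrix_vector_assoc)

lemma posdef_sym: "posdef P \<Longrightarrow> a \<bullet> (P *v z) = (P *v a) \<bullet> z"
  unfolding posdef_def by (metis dot_mv_transpose)

lemma S_posdef:
  fixes P :: "real^'n^'n" and R :: "real^'m^'m" and B :: "real^'m^'n"
  assumes P: "posdef P" and R: "posdef R"
  shows "posdef (R + transpose B ** P ** B)"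
  unfolding posdef_def
proof (intro conjI allI impI)
  show "transpose (R + transpose B ** P ** B) = R + transpose B ** P ** B"
    using P R by (simp add: posdef_def transpose_add' matrix_transpose_mul matrix_mul_assoc)
next
  fix x :: "real^'m" assume "x \<noteq> 0"
  then have "x \<bullet> (R *v x) > 0" using R by (simp add: posdef_def)
  moreover have "(B *v x) \<bullet> (P *v (B *v x)) \<ge> 0"
    using P unfolding posdef_def by (cases "B *v x = 0") (auto intro: less_imp_le)
  moreover have "x \<bullet> ((R + transpose B ** P ** B) *v x) = x \<bullet> (R *v x) + (B *v x) \<bullet> (P *v (B *v x))"
    by (simp add: matrix_vector_mult_add_rdistrib inner_add_right matrix_vector_mul_assoc[symmetric] dot_mv_transpose)
  ultimately show "x \<bullet> ((R + transpose B ** P ** B) *v x) > 0" by simp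
qed

lemma posdef_inv:
  fixes S :: "real^'m^'m"
  assumes S: "posdef S"
  shows "S ** matrix_inv S = mat 1" "matrix_inv S ** S = mat 1" "transpose (matrix_inv S) = matrix_inv S"
proof -
  have "\<forall>x. S *v x = 0 \<longrightarrow> x = 0"
    using S unfolding posdef_def by (metis inner_zero_right less_irrefl)
  then obtain C where C: "C ** S = mat 1" using matrix_left_invertible_ker by blast
  then have C2: "S ** C = mat 1" using matrix_left_right_inverse by blast
  have ex: "\<exists>A'. S ** A' = mat 1 \<and> A' ** S = mat 1" using C C2 by blast
  show inv1: "S ** matrix_inv S = mat 1" and inv2: "matrix_inv S ** S = mat 1"
    using someI_ex[OF ex] unfolding matrix_inv_def by blast+
  have "transpose (matrix_inv S) ** S = mat 1"
    using S inv1 by (metis matrix_transpose_mul posdef_def transpose_mat)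
  then have "transpose (matrix_inv S) = transpose (matrix_inv S) ** (S ** matrix_inv S)"
    using inv1 by (simp add: matrix_mul_rid)
  also have "\<dots> = matrix_inv S" using \<open>transpose (matrix_inv S) ** S = mat 1\<close>
    by (simp add: matrix_mul_assoc matrix_mul_lid)
  finally show "transpose (matrix_inv S) = matrix_inv S" .
qed

lemma closed_loop_quad:
  fixes P :: "real^'n^'n" and R :: "real^'m^'m" and B :: "real^'m^'n" and A :: "real^'n^'n"
  assumes P: "posdef P" and R: "posdef R"
  shows "(A *v x + B *v (gain A B R P *v x)) \<bullet> (P *v (A *v x + B *v (gain A B R P *v x)))
       = (A *v x) \<bullet> (P *v (A *v x))
         - x \<bullet> ((transpose A ** P ** B ** matrix_inv (R + transpose B ** P ** B) ** transpose B ** P ** A) *v x)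
         - x \<bullet> ((transpose (gain A B R P) ** R ** gain A B R P) *v x)"
proof -
  define S where "S = R + transpose B ** P ** B"
  have Sp: "posdef S" unfolding S_def using S_posdef[OF P R] .
  define a where "a = A *v x"
  define u where "u = transpose B *v (P *v a)"
  define y where "y = matrix_inv S *v u"
  have Kx: "gain A B R P *v x = - y"
    by (simp add: gain_def y_def u_def a_def S_def neg_mv matrix_vector_mul_assoc[symmetric])
  have Sy: "S *v y = u" using posdef_inv(1)[OF Sp]
    by (simp add: y_def matrix_vector_mul_assoc matrix_vector_mul_lid)
  have BPB: "(B *v y) \<bullet> (P *v (B *v y)) = y \<bullet> u - y \<bullet> (R *v y)"
  proof -
    have "y \<bullet> u = y \<bullet> (R *v y) + y \<bullet> ((transpose B ** P ** B) *v y)"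
      by (simp add: Sy[symmetric] S_def matrix_vector_mult_add_rdistrib inner_add_right)
    moreover have "y \<bullet> ((transpose B ** P ** B) *v y) = (B *v y) \<bullet> (P *v (B *v y))"
      by (simp add: matrix_vector_mul_assoc[symmetric] dot_mv_transpose)
    ultimately show ?thesis by simp
  qed
  have BPa: "(B *v y) \<bullet> (P *v a) = y \<bullet> u"
    by (simp add: u_def dot_mv_transpose)
  have aPB: "a \<bullet> (P *v (B *v y)) = y \<bullet> u"
    using BPa posdef_sym[OF P, of a "B *v y"] by (simp add: inner_commute)
  have G: "x \<bullet> ((transpose A ** P ** B ** matrix_inv S ** transpose B ** P ** A) *v x) = y \<bullet> u"
  proof -
    have "x \<bullet> ((transpose A ** P ** B ** matrix_inv S ** transpose B ** P ** A) *v x)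
        = x \<bullet> (transpose A *v (P *v (B *v y)))"
      by (simp add: matrix_vector_mul_assoc[symmetric] y_def u_def a_def)
    also have "\<dots> = a \<bullet> (P *v (B *v y))"
      by (simp add: a_def dot_mv_transpose)
    finally show ?thesis using aPB by simp
  qed
  have KRK: "x \<bullet> ((transpose (gain A B R P) ** R ** gain A B R P) *v x) = y \<bullet> (R *v y)"
  proof -
    have "x \<bullet> ((transpose (gain A B R P) ** R ** gain A B R P) *v x)
       = (gain A B R P *v x) \<bullet> (R *v (gain A B R P *v x))"
      by (simp add: matrix_vector_mul_assoc[symmetric] dot_mv_transpose)
    then show ?thesis by (simp add: Kx vec.neg)
  qed
  have "(A *v x + B *v (gain A B R P *v x)) \<bullet> (P *v (A *v x + B *v (gain A B R P *v x)))
      = (a - B *v y) \<bullet> (P *v (a - B *v y))"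
    by (simp add: Kx a_def vec.neg)
  also have "\<dots> = a \<bullet> (P *v a) - a \<bullet> (P *v (B *v y)) - (B *v y) \<bullet> (P *v a) + (B *v y) \<bullet> (P *v (B *v y))"
    by (simp add: matrix_vector_mult_diff_distrib inner_diff_left inner_diff_right)
  also have "\<dots> = a \<bullet> (P *v a) - y \<bullet> u - y \<bullet> (R *v y)"
    using BPB BPa aPB by simp
  finally show ?thesis using G KRK by (simp add: S_def a_def)
qed

lemma posdef_nonneg: "posdef P \<Longrightarrow> 0 \<le> x \<bullet> (P *v x)"
  unfolding posdef_def by (cases "x = 0") (auto intro: less_imp_le)

lemma G_nonneg:
  fixes P :: "real^'n^'n" and R :: "real^'m^'m" and B :: "real^'m^'n" and A :: "real^'n^'n"
  assumes P: "posdef P" and R: "posdef R"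
  shows "0 \<le> x \<bullet> ((transpose A ** P ** B ** matrix_inv (R + transpose B ** P ** B) ** transpose B ** P ** A) *v x)"
proof -
  define S where "S = R + transpose B ** P ** B"
  have Sp: "posdef S" unfolding S_def using S_posdef[OF P R] .
  define u where "u = transpose B *v (P *v (A *v x))"
  define y where "y = matrix_inv S *v u"
  have Sy: "S *v y = u" using posdef_inv(1)[OF Sp]
    by (simp add: y_def matrix_vector_mul_assoc matrix_vector_mul_lid)
  have "x \<bullet> ((transpose A ** P ** B ** matrix_inv S ** transpose B ** P ** A) *v x)
      = (A *v x) \<bullet> (P *v (B *v y))"
    by (simp add: matrix_vector_mul_assoc[symmetric] y_def u_def dot_mv_transpose)
  also have "\<dots> = (P *v (A *v x)) \<bullet> (B *v y)" using posdef_sym[OF P] by simp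
  also have "\<dots> = u \<bullet> y" by (simp add: u_def dot_mv_transpose inner_commute)
  also have "\<dots> = y \<bullet> (S *v y)" by (simp add: Sy inner_commute)
  finally show ?thesis using posdef_nonneg[OF Sp, of y] by (simp add: S_def)
qed

lemma KRK_nonneg:
  fixes K :: "real^'n^'m" and R :: "real^'m^'m"
  assumes R: "posdef R"
  shows "0 \<le> x \<bullet> ((transpose K ** R ** K) *v x)"
proof -
  have "x \<bullet> ((transpose K ** R ** K) *v x) = (K *v x) \<bullet> (R *v (K *v x))"
    by (simp add: matrix_vector_mul_assoc[symmetric] dot_mv_transpose)
  then show ?thesis using posdef_nonneg[OF R] by simp
qed

lemma part2:
  fixes P Q A :: "real^'n^'n" and R :: "real^'m^'m" and B :: "real^'m^'n"
  assumes P: "posdef P" and R: "posdef R" and Q: "posdef Q" and q: "q \<le> qh" "q < 1"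
  shows "posdef (Q + (1 - q) *\<^sub>R (transpose (gain A B R P) ** R ** gain A B R P)
            - (q - qh) *\<^sub>R (transpose A ** P ** B ** matrix_inv (R + transpose B ** P ** B)
                               ** transpose B ** P ** A))"
  unfolding posdef_def
proof (intro conjI allI impI)
  have Ps: "transpose P = P" and Rs: "transpose R = R" and Qs: "transpose Q = Q"
    using P R Q by (auto simp: posdef_def)
  have Ss: "transpose (matrix_inv (R + transpose B ** P ** B)) = matrix_inv (R + transpose B ** P ** B)"
    using posdef_inv(3)[OF S_posdef[OF P R]] .
  show "transpose (Q + (1 - q) *\<^sub>R (transpose (gain A B R P) ** R ** gain A B R P)
            - (q - qh) *\<^sub>R (transpose A ** P ** B ** matrix_inv (R + transpose B ** P ** B)
                               ** transpose B ** P ** A)) =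
        (Q + (1 - q) *\<^sub>R (transpose (gain A B R P) ** R ** gain A B R P)
            - (q - qh) *\<^sub>R (transpose A ** P ** B ** matrix_inv (R + transpose B ** P ** B)
                               ** transpose B ** P ** A))"
    by (simp add: transpose_add' transpose_diff' transpose_scalar matrix_transpose_mul Ps Rs Qs Ss matrix_mul_assoc)
next
  fix x :: "real^'n" assume "x \<noteq> 0"
  then have "x \<bullet> (Q *v x) > 0" using Q by (simp add: posdef_def)
  moreover have "0 \<le> (1 - q) * (x \<bullet> ((transpose (gain A B R P) ** R ** gain A B R P) *v x))"
    using KRK_nonneg[OF R, where K="gain A B R P" and x=x] q by simp
  moreover have "0 \<le> (qh - q) * (x \<bullet> ((transpose A ** P ** B ** matrix_inv (R + transpose B ** P ** B)
                               ** transpose B ** P ** A) *v x))"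
    using G_nonneg[OF P R] q by simp
  ultimately show "0 < x \<bullet> ((Q + (1 - q) *\<^sub>R (transpose (gain A B R P) ** R ** gain A B R P)
            - (q - qh) *\<^sub>R (transpose A ** P ** B ** matrix_inv (R + transpose B ** P ** B)
                               ** transpose B ** P ** A)) *v x)"
    by (simp add: matrix_vector_mult_add_rdistrib matrix_vector_mult_diff_rdistrib scaleR_mv
                  inner_add_right inner_diff_right algebra_simps)
qed

definition Gm :: "real^'n^'n \<Rightarrow> real^'m^'n \<Rightarrow> real^'m^'m \<Rightarrow> real^'n^'n \<Rightarrow> real^'n^'n" where
  "Gm A B R P = transpose A ** P ** B ** matrix_inv (R + transpose B ** P ** B) ** transpose B ** P ** A"

definition Wm :: "real \<Rightarrow> real \<Rightarrow> real^'n^'n \<Rightarrow> real^'m^'n \<Rightarrow> real^'n^'n \<Rightarrow> real^'m^'m \<Rightarrow> real^'n^'n \<Rightarrow> real^'n^'n" where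
  "Wm q qh A B Q R P = Q + (1 - q) *\<^sub>R (transpose (gain A B R P) ** R ** gain A B R P) - (q - qh) *\<^sub>R Gm A B R P"

definition Dq :: "real^'n^'n \<Rightarrow> real^'m^'n \<Rightarrow> real^'m^'m \<Rightarrow> real^'n^'n \<Rightarrow> real^'n \<Rightarrow> real" where
  "Dq A B R P x = - (x \<bullet> (Gm A B R P *v x)) - x \<bullet> ((transpose (gain A B R P) ** R ** gain A B R P) *v x)"

lemma step_identity:
  fixes P Q A :: "real^'n^'n" and R :: "real^'m^'m" and B :: "real^'m^'n"
  assumes P: "posdef P" and R: "posdef R" and ric: "P = ric qh A B Q R P" and l: "l = 0 \<or> l = 1"
  shows "(A *v x + l *\<^sub>R (B *v (gain A B R P *v x))) \<bullet> (P *v (A *v x + l *\<^sub>R (B *v (gain A B R P *v x))))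
       = x \<bullet> (P *v x) - x \<bullet> (Wm q qh A B Q R P *v x) + (l - (1 - q)) * Dq A B R P x"
proof -
  define a where "a = (A *v x) \<bullet> (P *v (A *v x))"
  have cl: "(A *v x + l *\<^sub>R (B *v (gain A B R P *v x))) \<bullet> (P *v (A *v x + l *\<^sub>R (B *v (gain A B R P *v x))))
      = a + l * Dq A B R P x"
    using l closed_loop_quad[OF P R, of A x B] by (auto simp: a_def Dq_def Gm_def)
  have "x \<bullet> (P *v x) = x \<bullet> (ric qh A B Q R P *v x)" using ric by simp
  also have "\<dots> = x \<bullet> (Q *v x) + a - (1 - qh) * (x \<bullet> (Gm A B R P *v x))"
    unfolding ric_def Gm_def a_def
    by (simp add: matrix_vector_mult_add_rdistrib matrix_vector_mult_diff_rdistrib scaleR_mv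
                  inner_add_right inner_diff_right matrix_vector_mul_assoc[symmetric] dot_mv_transpose)
  finally have Px: "x \<bullet> (P *v x) = x \<bullet> (Q *v x) + a - (1 - qh) * (x \<bullet> (Gm A B R P *v x))" .
  have Wx: "x \<bullet> (Wm q qh A B Q R P *v x) = x \<bullet> (Q *v x)
      + (1 - q) * (x \<bullet> ((transpose (gain A B R P) ** R ** gain A B R P) *v x)) - (q - qh) * (x \<bullet> (Gm A B R P *v x))"
    unfolding Wm_def
    by (simp add: matrix_vector_mult_add_rdistrib matrix_vector_mult_diff_rdistrib scaleR_mv
                  inner_add_right inner_diff_right)
  show ?thesis unfolding cl Px Wx Dq_def by (simp add: algebra_simps)
qed



lemma mv_meas[measurable]: fixes A :: "real^'n^'m" shows "f \<in> borel_measurable N \<Longrightarrow> (\<lambda>x. A *v f x) \<in> borel_measurable N"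
  using borel_measurable_continuous_on[OF linear_continuous_on[OF matrix_vector_mul_bounded_linear]] by blast

lemma traj_meas:
  assumes "\<And>i. i < t \<Longrightarrow> lam i \<in> borel_measurable N" and x0[measurable]: "x0 \<in> borel_measurable N"
  shows "(\<lambda>w. traj A B K lam x0 t w) \<in> borel_measurable N"
  using assms(1)
proof (induction t)
  case 0 then show ?case by simp
next
  case (Suc t)
  have [measurable]: "(\<lambda>w. traj A B K lam x0 t w) \<in> borel_measurable N" using Suc by simp
  have [measurable]: "lam t \<in> borel_measurable N" using Suc by simp
  show ?case by simp
qed

lemma mv_bound: fixes A :: "real^'n^'m" shows "\<exists>K\<ge>0. \<forall>x. norm (A *v x) \<le> K * norm x"
proof -
  obtain K where K: "K > 0" "\<And>x. norm (A *v x) \<le> norm x * K"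
    using bounded_linear.pos_bounded[OF matrix_vector_mul_bounded_linear[of A]] by blast
  then show ?thesis by (metis less_imp_le mult.commute)
qed

lemma traj_bound:
  assumes lam: "\<And>t w. w \<in> S \<Longrightarrow> lam t w \<in> {0, 1}"
  shows "\<exists>C\<ge>0. \<forall>w\<in>S. norm (traj A B K lam z t w) \<le> C * norm (z w)"
proof (induction t)
  case 0 then show ?case by (intro exI[of _ 1]) auto
next
  case (Suc t)
  then obtain C where C: "C \<ge> 0" "\<And>w. w \<in> S \<Longrightarrow> norm (traj A B K lam z t w) \<le> C * norm (z w)" by blast
  obtain Ka where Ka: "Ka \<ge> 0" "\<And>x. norm (A *v x) \<le> Ka * norm x" using mv_bound by blast
  obtain Kb where Kb: "Kb \<ge> 0" "\<And>x. norm ((B ** K) *v x) \<le> Kb * norm x" using mv_bound by blast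
  show ?case
  proof (intro exI[of _ "(Ka + Kb) * C"] conjI ballI)
    show "0 \<le> (Ka + Kb) * C" using Ka Kb C by simp
    fix w assume w: "w \<in> S"
    define x where "x = traj A B K lam z t w"
    have "norm (traj A B K lam z (Suc t) w) = norm (A *v x + lam t w *\<^sub>R ((B ** K) *v x))"
      by (simp add: x_def matrix_vector_mul_assoc)
    also have "\<dots> \<le> norm (A *v x) + \<bar>lam t w\<bar> * norm ((B ** K) *v x)"
      using norm_triangle_ineq[of "A *v x" "lam t w *\<^sub>R ((B ** K) *v x)"] by simp
    also have "\<dots> \<le> Ka * norm x + 1 * (Kb * norm x)"
    proof -
      have l: "\<bar>lam t w\<bar> \<le> 1" using lam[OF w, of t] by auto
      have "\<bar>lam t w\<bar> * norm ((B ** K) *v x) \<le> 1 * (Kb * norm x)"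
        by (rule mult_mono) (use l Kb(2)[of x] in auto)
      then show ?thesis using Ka(2)[of x] by linarith
    qed
    also have "\<dots> = (Ka + Kb) * norm x" by (simp add: algebra_simps)
    also have "\<dots> \<le> (Ka + Kb) * (C * norm (z w))"
      using C(2)[OF w] Ka Kb by (simp add: x_def mult_left_mono)
    finally show "norm (traj A B K lam z (Suc t) w) \<le> (Ka + Kb) * C * norm (z w)" by (simp only: mult.assoc)
  qed
qed

lemma traj_quad_integrable:
  fixes M0 :: "real^'n^'n" and z :: "'a \<Rightarrow> real^'n"
  assumes lam: "\<And>t w. w \<in> space M \<Longrightarrow> lam t w \<in> {0, 1}"
    and lam_m: "\<And>i. lam i \<in> borel_measurable M" and z: "z \<in> borel_measurable M"
    and x0_var: "integrable M (\<lambda>w. norm (z w) ^ 2)"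
  shows "integrable M (\<lambda>w. traj A B K lam z t w \<bullet> (M0 *v traj A B K lam z t w))"
proof -
  have "\<exists>C\<ge>0. \<forall>w\<in>space M. norm (traj A B K lam z t w) \<le> C * norm (z w)"
    by (rule traj_bound[OF lam])
  then obtain C where C0: "C \<ge> 0" and C1: "\<forall>w\<in>space M. norm (traj A B K lam z t w) \<le> C * norm (z w)"
    by blast
  note C = C0 bspec[OF C1]
  from quad_ub[of M0] obtain D where D: "D > 0" "\<And>x. \<bar>x \<bullet> (M0 *v x)\<bar> \<le> D * (x \<bullet> x)" by blast
  have [measurable]: "(\<lambda>w. traj A B K lam z t w) \<in> borel_measurable M"
    using traj_meas[OF lam_m z] .
  show ?thesis
  proof (rule Bochner_Integration.integrable_bound[where f="\<lambda>w. (D * C^2) * norm (z w) ^ 2"])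
    show "integrable M (\<lambda>w. (D * C^2) * norm (z w) ^ 2)" using x0_var by (intro integrable_mult_right)
    show "(\<lambda>w. traj A B K lam z t w \<bullet> (M0 *v traj A B K lam z t w)) \<in> borel_measurable M"
      by (intro borel_measurable_inner mv_meas) simp_all
    show "AE w in M. norm (traj A B K lam z t w \<bullet> (M0 *v traj A B K lam z t w)) \<le> norm ((D * C^2) * norm (z w) ^ 2)"
    proof (rule AE_I2)
      fix w assume w: "w \<in> space M"
      define x where "x = traj A B K lam z t w"
      have "norm (x \<bullet> (M0 *v x)) \<le> D * (norm x)^2" using D(2)[of x] by (simp add: power2_norm_eq_inner)
      also have "\<dots> \<le> D * (C * norm (z w))^2"
        using C(2)[OF w] D(1) by (intro mult_left_mono power_mono) (auto simp: x_def)
      also have "\<dots> = norm ((D * C^2) * norm (z w) ^ 2)" using D(1) by (simp add: power_mult_distrib)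
      finally show "norm (traj A B K lam z t w \<bullet> (M0 *v traj A B K lam z t w)) \<le> norm ((D * C^2) * norm (z w) ^ 2)"
        by (simp add: x_def)
    qed
  qed
qed



lemma (in prob_space) indep_set_mono':
  "indep_set A B \<Longrightarrow> A' \<subseteq> A \<Longrightarrow> B' \<subseteq> B \<Longrightarrow> indep_set A' B'"
  unfolding indep_sets2_eq by blast


lemma pi_prefix_sets:
  fixes Y :: "nat \<Rightarrow> real set"
  assumes "\<And>i. Y i \<in> sets borel"
  shows "{g \<in> space (Pi\<^sub>M UNIV (\<lambda>_. borel)). (\<forall>i<t. g i \<in> Y i)} \<in> sets (Pi\<^sub>M UNIV (\<lambda>_. borel))"
  using assms by measurable

lemma (in prob_space) prob_lam_prefix:
  fixes lam :: "nat \<Rightarrow> 'a \<Rightarrow> real" and Y :: "nat \<Rightarrow> real set"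
  assumes lam_indep: "indep_vars (\<lambda>_. borel) lam UNIV" and Y: "\<And>i. Y i \<in> sets borel"
  shows "prob {w \<in> space M. \<forall>i<t. lam i w \<in> Y i} = (\<Prod>i<t. prob (lam i -` Y i \<inter> space M))"
proof (cases "t = 0")
  case True then show ?thesis by (simp add: prob_space)
next
  case False
  have "{w \<in> space M. \<forall>i<t. lam i w \<in> Y i} = (\<Inter>i\<in>{..<t}. lam i -` Y i \<inter> space M)"
    using False by auto
  moreover have ne: "{..<t} \<noteq> {}" using False by auto
  ultimately show ?thesis using indep_varsD[OF lam_indep, of "{..<t}" Y] Y by simp
qed

lemma indep_traj:
  fixes z :: "'a \<Rightarrow> real^'n" and lam :: "nat \<Rightarrow> 'a \<Rightarrow> real" and h :: "real^'n \<Rightarrow> real"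
  assumes prob: "prob_space M"
    and z_m: "z \<in> borel_measurable M"
    and lam_indep: "prob_space.indep_vars M (\<lambda>_. borel) lam UNIV"
    and z_indep: "prob_space.indep_set M (sets (vimage_algebra (space M) z borel))
         (sets (vimage_algebra (space M) (\<lambda>w t. lam t w) (Pi\<^sub>M UNIV (\<lambda>_. borel))))"
    and h: "h \<in> borel_measurable borel"
  shows "prob_space.indep_var M borel (\<lambda>w. h (traj A B K lam z t w)) borel (lam t)"
proof -
  interpret prob_space M by (rule prob)
  have lam_m[measurable]: "\<And>i. lam i \<in> borel_measurable M"
    using lam_indep unfolding indep_vars_def2 by auto
  note z_m[measurable]
  define E where "E = {{w \<in> space M. z w \<in> X \<and> (\<forall>i<t. lam i w \<in> Y i)} | X Y.
     X \<in> sets borel \<and> (\<forall>i. Y i \<in> sets (borel :: real measure))}"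
  define L where "L = {{w \<in> space M. lam t w \<in> C} | C. C \<in> sets (borel :: real measure)}"
  have E_ev: "E \<subseteq> events" unfolding E_def by auto
  have L_ev: "L \<subseteq> events" unfolding L_def by auto
  have E_pow: "E \<subseteq> Pow (space M)" unfolding E_def by auto
  have indEL: "indep_set E L"
  proof (rule indep_setI[OF E_ev L_ev])
    fix a b assume "a \<in> E" "b \<in> L"
    then obtain X Y C where X: "X \<in> sets borel" and Y: "\<And>i. Y i \<in> sets (borel :: real measure)"
      and C: "C \<in> sets (borel :: real measure)"
      and a: "a = {w \<in> space M. z w \<in> X \<and> (\<forall>i<t. lam i w \<in> Y i)}"
      and b: "b = {w \<in> space M. lam t w \<in> C}"
      unfolding E_def L_def by blast
    define Y' where "Y' i = (if i < t then Y i else C)" for i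
    have Y': "\<And>i. Y' i \<in> sets borel" using Y C by (simp add: Y'_def)
    define ZX where "ZX = z -` X \<inter> space M"
    define Zl where "Zl = {w \<in> space M. \<forall>i<t. lam i w \<in> Y i}"
    define Zlb where "Zlb = {w \<in> space M. \<forall>i<Suc t. lam i w \<in> Y' i}"
    have ZX: "ZX \<in> sets (vimage_algebra (space M) z borel)"
      unfolding ZX_def by (rule in_vimage_algebra[OF X])
    have Zl: "Zl \<in> sets (vimage_algebra (space M) (\<lambda>w t. lam t w) (Pi\<^sub>M UNIV (\<lambda>_. borel)))"
    proof -
      have eq: "(\<lambda>w i. lam i w) -` {g \<in> space (Pi\<^sub>M UNIV (\<lambda>_. borel)). (\<forall>i<t. g i \<in> Y i)} \<inter> space M = Zl"
        by (auto simp: space_PiM Zl_def)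
      have S: "{g \<in> space (Pi\<^sub>M UNIV (\<lambda>_. borel)). (\<forall>i<t. g i \<in> Y i)} \<in> sets (Pi\<^sub>M UNIV (\<lambda>_. borel))"
        using Y by (rule pi_prefix_sets)
      show ?thesis using in_vimage_algebra[OF S, of "\<lambda>w i. lam i w" "space M"] by (simp only: eq)
    qed
    have Zlb: "Zlb \<in> sets (vimage_algebra (space M) (\<lambda>w t. lam t w) (Pi\<^sub>M UNIV (\<lambda>_. borel)))"
    proof -
      have eq: "(\<lambda>w i. lam i w) -` {g \<in> space (Pi\<^sub>M UNIV (\<lambda>_. borel)). (\<forall>i<Suc t. g i \<in> Y' i)} \<inter> space M = Zlb"
        by (auto simp: space_PiM Zlb_def)
      have S: "{g \<in> space (Pi\<^sub>M UNIV (\<lambda>_. borel)). (\<forall>i<Suc t. g i \<in> Y' i)} \<in> sets (Pi\<^sub>M UNIV (\<lambda>_. borel))"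
        using Y' by (rule pi_prefix_sets)
      show ?thesis using in_vimage_algebra[OF S, of "\<lambda>w i. lam i w" "space M"] by (simp only: eq)
    qed
    have aeq: "a = ZX \<inter> Zl" by (auto simp: a ZX_def Zl_def)
    have abeq: "a \<inter> b = ZX \<inter> Zlb"
      by (auto simp: a b ZX_def Zlb_def Y'_def less_Suc_eq)
    have pa: "prob a = prob ZX * prob Zl"
      unfolding aeq by (rule indep_setD[OF z_indep ZX Zl])
    have pab: "prob (a \<inter> b) = prob ZX * prob Zlb"
      unfolding abeq by (rule indep_setD[OF z_indep ZX Zlb])
    have pZl: "prob Zl = (\<Prod>i<t. prob (lam i -` Y i \<inter> space M))"
      unfolding Zl_def by (rule prob_lam_prefix[OF lam_indep Y])
    have "prob Zlb = (\<Prod>i<Suc t. prob (lam i -` Y' i \<inter> space M))"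
      unfolding Zlb_def by (rule prob_lam_prefix[OF lam_indep Y'])
    also have "\<dots> = (\<Prod>i<t. prob (lam i -` Y i \<inter> space M)) * prob b"
    proof -
      have "b = lam t -` Y' t \<inter> space M" by (auto simp: b Y'_def)
      moreover have "(\<Prod>i<t. prob (lam i -` Y' i \<inter> space M)) = (\<Prod>i<t. prob (lam i -` Y i \<inter> space M))"
        by (rule prod.cong) (auto simp: Y'_def)
      ultimately show ?thesis by simp
    qed
    finally have "prob Zlb = prob Zl * prob b" using pZl by simp
    then show "prob (a \<inter> b) = prob a * prob b" using pa pab by simp
  qed
  have IE: "Int_stable E"
  proof (rule Int_stableI)
    fix a b assume "a \<in> E" "b \<in> E"
    then obtain X Y X' Y' where X: "X \<in> sets borel" "X' \<in> sets borel"
      and Y: "\<forall>i. Y i \<in> sets (borel :: real measure)" "\<forall>i. Y' i \<in> sets (borel :: real measure)"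
      and a: "a = {w \<in> space M. z w \<in> X \<and> (\<forall>i<t. lam i w \<in> Y i)}"
      and b: "b = {w \<in> space M. z w \<in> X' \<and> (\<forall>i<t. lam i w \<in> Y' i)}"
      unfolding E_def by blast
    have e1: "a \<inter> b = {w \<in> space M. z w \<in> X \<inter> X' \<and> (\<forall>i<t. lam i w \<in> (\<lambda>i. Y i \<inter> Y' i) i)}"
      unfolding a b by auto
    have e2: "X \<inter> X' \<in> sets borel" using X by auto
    have e3: "\<forall>i. (\<lambda>i. Y i \<inter> Y' i) i \<in> sets (borel :: real measure)" using Y by auto
    show "a \<inter> b \<in> E" unfolding E_def
      by (rule CollectI, rule exI[of _ "X \<inter> X'"], rule exI[of _ "\<lambda>i. Y i \<inter> Y' i"]) (simp only: e1 e2 e3 simp_thms)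
  qed
  have IL: "Int_stable L"
  proof (rule Int_stableI)
    fix a b assume "a \<in> L" "b \<in> L"
    then obtain C C' where C: "C \<in> sets (borel :: real measure)" "C' \<in> sets (borel :: real measure)"
      and a: "a = {w \<in> space M. lam t w \<in> C}" and b: "b = {w \<in> space M. lam t w \<in> C'}"
      unfolding L_def by blast
    have e1: "a \<inter> b = {w \<in> space M. lam t w \<in> C \<inter> C'}" unfolding a b by auto
    have e2: "C \<inter> C' \<in> sets borel" using C by auto
    show "a \<inter> b \<in> L" unfolding L_def
      by (rule CollectI, rule exI[of _ "C \<inter> C'"]) (simp only: e1 e2 simp_thms)
  qed
  have indS: "indep_set (sigma_sets (space M) E) (sigma_sets (space M) L)"
    by (rule indep_set_sigma_sets[OF indEL IE IL])
  define N where "N = sigma (space M) E"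
  have spN: "space N = space M" unfolding N_def using E_pow by simp
  have setsN: "sets N = sigma_sets (space M) E" unfolding N_def using E_pow by simp
  have zN: "z \<in> borel_measurable N"
  proof (rule measurableI)
    fix X :: "(real^'n) set" assume X: "X \<in> sets borel"
    have "z -` X \<inter> space N = {w \<in> space M. z w \<in> X \<and> (\<forall>i<t. lam i w \<in> (\<lambda>_. UNIV) i)}"
      using spN by auto
    also have "\<dots> \<in> E" unfolding E_def
      by (rule CollectI, rule exI[of _ X], rule exI[of _ "\<lambda>_. UNIV"]) (simp add: X)
    finally show "z -` X \<inter> space N \<in> sets N" unfolding setsN by (rule sigma_sets.Basic)
  qed simp
  have lamN: "lam i \<in> borel_measurable N" if "i < t" for i
  proof (rule measurableI)
    fix C :: "real set" assume C: "C \<in> sets borel"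
    have "lam i -` C \<inter> space N = {w \<in> space M. z w \<in> UNIV \<and> (\<forall>j<t. lam j w \<in> (\<lambda>j. if j = i then C else UNIV) j)}"
      using spN that by auto
    also have "\<dots> \<in> E" unfolding E_def
      by (rule CollectI, rule exI[of _ UNIV], rule exI[of _ "\<lambda>j. if j = i then C else UNIV"]) (simp add: C)
    finally show "lam i -` C \<inter> space N \<in> sets N" unfolding setsN by (rule sigma_sets.Basic)
  qed simp
  have gN: "(\<lambda>w. h (traj A B K lam z t w)) \<in> borel_measurable N"
  proof -
    have "(\<lambda>w. traj A B K lam z t w) \<in> borel_measurable N"
      by (rule traj_meas) (auto intro: lamN zN)
    then show ?thesis using measurable_compose[OF _ h] by blast
  qed
  have gM[measurable]: "(\<lambda>w. h (traj A B K lam z t w)) \<in> borel_measurable M"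
  proof -
    have "(\<lambda>w. traj A B K lam z t w) \<in> borel_measurable M"
      by (rule traj_meas) (auto intro: lam_m z_m)
    then show ?thesis using measurable_compose[OF _ h] by blast
  qed
  have sub1: "sigma_sets (space M) {(\<lambda>w. h (traj A B K lam z t w)) -` U \<inter> space M | U. U \<in> sets (borel :: real measure)}
      \<subseteq> sigma_sets (space M) E"
  proof (rule sigma_sets_mono)
    show "{(\<lambda>w. h (traj A B K lam z t w)) -` U \<inter> space M | U. U \<in> sets (borel :: real measure)} \<subseteq> sigma_sets (space M) E"
      using measurable_sets[OF gN] spN setsN by auto
  qed
  have sub2: "sigma_sets (space M) {lam t -` U \<inter> space M | U. U \<in> sets (borel :: real measure)}
      \<subseteq> sigma_sets (space M) L"
  proof (rule sigma_sets_mono')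
    show "{lam t -` U \<inter> space M | U. U \<in> sets (borel :: real measure)} \<subseteq> L"
      unfolding L_def by auto
  qed
  show ?thesis
    unfolding indep_var_eq
    using indep_set_mono'[OF indS sub1 sub2] by simp
qed



lemma (in prob_space) lam_integral:
  fixes lam :: "nat \<Rightarrow> 'a \<Rightarrow> real"
  assumes lam_val: "\<And>t w. w \<in> space M \<Longrightarrow> lam t w \<in> {0, 1}"
    and lam_m: "lam t \<in> borel_measurable M"
    and lam_dist: "measure M {w \<in> space M. lam t w = 0} = q"
  shows "integrable M (lam t)" "integral\<^sup>L M (lam t) = 1 - q"
proof -
  show "integrable M (lam t)"
  proof (rule integrable_const_bound[where B=1])
    show "AE x in M. norm (lam t x) \<le> 1"
    proof (rule AE_I2)
      fix x assume "x \<in> space M"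
      then show "norm (lam t x) \<le> 1" using lam_val[of x t] by auto
    qed
  qed (rule lam_m)
  define S where "S = {w \<in> space M. lam t w \<noteq> 0}"
  have [measurable]: "lam t \<in> borel_measurable M" by (rule lam_m)
  have Sev: "S \<in> events" unfolding S_def by measurable
  have Zev: "{w \<in> space M. lam t w = 0} \<in> events" by measurable
  have "integral\<^sup>L M (lam t) = integral\<^sup>L M (indicator S :: 'a \<Rightarrow> real)"
    by (rule Bochner_Integration.integral_cong) (use lam_val in \<open>auto simp: S_def indicator_def\<close>)
  also have "\<dots> = measure M S" using Sev by simp
  also have "S = space M - {w \<in> space M. lam t w = 0}" by (auto simp: S_def)
  also have "measure M \<dots> = 1 - q" using prob_compl[OF Zev] lam_dist by simp
  finally show "integral\<^sup>L M (lam t) = 1 - q" .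
qed

lemma mss_step:
  fixes A Q Phat :: "real^'n^'n" and B :: "real^'m^'n" and R :: "real^'m^'m"
    and q qhat :: real
    and M :: "'a measure" and x0 :: "'a \<Rightarrow> real^'n" and lam :: "nat \<Rightarrow> 'a \<Rightarrow> real"
  assumes R: "posdef R"
    and Phat: "posdef Phat" "Phat = ric qhat A B Q R Phat"
    and prob: "prob_space M"
    and x0_meas: "x0 \<in> borel_measurable M"
    and x0_var: "integrable M (\<lambda>w. norm (x0 w) ^ 2)"
    and lam_val: "\<And>t w. w \<in> space M \<Longrightarrow> lam t w \<in> {0, 1}"
    and lam_indep: "prob_space.indep_vars M (\<lambda>_. borel) lam UNIV"
    and lam_dist: "\<And>t. measure M {w \<in> space M. lam t w = 0} = q"
    and x0_indep: "prob_space.indep_set M (sets (vimage_algebra (space M) x0 borel))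
         (sets (vimage_algebra (space M) (\<lambda>w t. lam t w) (Pi\<^sub>M UNIV (\<lambda>_. borel))))"
  shows "integral\<^sup>L M (\<lambda>w. traj A B (gain A B R Phat) lam x0 (Suc t) w \<bullet> (Phat *v traj A B (gain A B R Phat) lam x0 (Suc t) w))
       = integral\<^sup>L M (\<lambda>w. traj A B (gain A B R Phat) lam x0 t w \<bullet> (Phat *v traj A B (gain A B R Phat) lam x0 t w))
       - integral\<^sup>L M (\<lambda>w. traj A B (gain A B R Phat) lam x0 t w \<bullet> (Wm q qhat A B Q R Phat *v traj A B (gain A B R Phat) lam x0 t w))"
proof -
  interpret prob_space M by (rule prob)
  define K where "K = gain A B R Phat"
  define X where "X = traj A B K lam x0 t"
  have lam_m: "\<And>i. lam i \<in> borel_measurable M"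
    using lam_indep unfolding indep_vars_def2 by auto
  have quadI: "\<And>M0. integrable M (\<lambda>w. X w \<bullet> (M0 *v X w))"
    unfolding X_def by (rule traj_quad_integrable[OF lam_val lam_m x0_meas x0_var])
  have iD: "integrable M (\<lambda>w. Dq A B R Phat (X w))"
    unfolding Dq_def using quadI by (intro Bochner_Integration.integrable_diff integrable_minus) auto
  have Dm: "Dq A B R Phat \<in> borel_measurable borel" unfolding Dq_def by measurable
  have ind: "indep_var borel (\<lambda>w. Dq A B R Phat (X w)) borel (lam t)"
    unfolding X_def by (rule indep_traj[OF prob x0_meas lam_indep x0_indep Dm])
  note li = lam_integral[where lam=lam and t=t and q=q, OF lam_val lam_m lam_dist]
  have iDl: "integrable M (\<lambda>w. Dq A B R Phat (X w) * lam t w)"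
    by (rule indep_var_integrable[OF ind iD li(1)])
  have eDl: "integral\<^sup>L M (\<lambda>w. Dq A B R Phat (X w) * lam t w) = integral\<^sup>L M (\<lambda>w. Dq A B R Phat (X w)) * (1 - q)"
    using indep_var_lebesgue_integral[OF ind iD li(1)] li(2) by simp
  have pw: "traj A B K lam x0 (Suc t) w \<bullet> (Phat *v traj A B K lam x0 (Suc t) w)
      = X w \<bullet> (Phat *v X w) - X w \<bullet> (Wm q qhat A B Q R Phat *v X w)
        + Dq A B R Phat (X w) * lam t w - (1 - q) * Dq A B R Phat (X w)"
    if w: "w \<in> space M" for w
  proof -
    have l: "lam t w = 0 \<or> lam t w = 1" using lam_val[OF w, of t] by auto
    have "traj A B K lam x0 (Suc t) w = A *v X w + lam t w *\<^sub>R (B *v (gain A B R Phat *v X w))"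
      by (simp add: X_def K_def)
    then show ?thesis
      using step_identity[OF Phat(1) R Phat(2) l, of "X w" q] by (simp add: algebra_simps)
  qed
  have "integral\<^sup>L M (\<lambda>w. traj A B K lam x0 (Suc t) w \<bullet> (Phat *v traj A B K lam x0 (Suc t) w))
     = integral\<^sup>L M (\<lambda>w. X w \<bullet> (Phat *v X w) - X w \<bullet> (Wm q qhat A B Q R Phat *v X w)
        + Dq A B R Phat (X w) * lam t w - (1 - q) * Dq A B R Phat (X w))"
    by (rule Bochner_Integration.integral_cong[OF refl pw])
  also have "\<dots> = integral\<^sup>L M (\<lambda>w. X w \<bullet> (Phat *v X w)) - integral\<^sup>L M (\<lambda>w. X w \<bullet> (Wm q qhat A B Q R Phat *v X w))
        + integral\<^sup>L M (\<lambda>w. Dq A B R Phat (X w) * lam t w) - (1 - q) * integral\<^sup>L M (\<lambda>w. Dq A B R Phat (X w))"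
    using quadI iD iDl by simp
  also have "\<dots> = integral\<^sup>L M (\<lambda>w. X w \<bullet> (Phat *v X w)) - integral\<^sup>L M (\<lambda>w. X w \<bullet> (Wm q qhat A B Q R Phat *v X w))"
    using eDl by simp
  finally show ?thesis by (simp add: X_def K_def)
qed



theorem theorem2:
  fixes A Q Phat :: "real^'n^'n" and B :: "real^'m^'n" and R :: "real^'m^'m"
    and q qhat :: real
    and M :: "'a measure" and x0 :: "'a \<Rightarrow> real^'n" and lam :: "nat \<Rightarrow> 'a \<Rightarrow> real"
  assumes Q: "posdef Q" and R: "posdef R" and stab: "stabilizable A B"
    and q: "0 < q" "q < 1" and qc: "q < qcrit A B Q R"
    and qhat: "0 \<le> qhat" "qhat \<le> 1" and qhatc: "qhat < qcrit A B Q R"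
    and Phat: "posdef Phat" "Phat = ric qhat A B Q R Phat"
    and prob: "prob_space M"
    and x0_meas: "x0 \<in> borel_measurable M"
    and x0_var: "integrable M (\<lambda>w. norm (x0 w) ^ 2)"
    and lam_val: "\<And>t w. w \<in> space M \<Longrightarrow> lam t w \<in> {0, 1}"
    and lam_indep: "prob_space.indep_vars M (\<lambda>_. borel) lam UNIV"
    and lam_dist: "\<And>t. measure M {w \<in> space M. lam t w = 0} = q"
    and x0_indep: "prob_space.indep_set M (sets (vimage_algebra (space M) x0 borel))
         (sets (vimage_algebra (space M) (\<lambda>w t. lam t w) (Pi\<^sub>M UNIV (\<lambda>_. borel))))"
  shows "(posdef (Q + (1 - q) *\<^sub>R (transpose (gain A B R Phat) ** R ** gain A B R Phat)
            - (q - qhat) *\<^sub>R (transpose A ** Phat ** B ** matrix_inv (R + transpose B ** Phat ** B)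
                               ** transpose B ** Phat ** A))
          \<longrightarrow> (\<lambda>t. integral\<^sup>L M (\<lambda>w. traj A B (gain A B R Phat) lam x0 t w
                                   \<bullet> traj A B (gain A B R Phat) lam x0 t w)) \<longlonglongrightarrow> 0)
       \<and> (q \<le> qhat \<longrightarrow>
          posdef (Q + (1 - q) *\<^sub>R (transpose (gain A B R Phat) ** R ** gain A B R Phat)
            - (q - qhat) *\<^sub>R (transpose A ** Phat ** B ** matrix_inv (R + transpose B ** Phat ** B)
                               ** transpose B ** Phat ** A)))"
proof -
  interpret prob_space M by (rule prob)
  have Weq: "Q + (1 - q) *\<^sub>R (transpose (gain A B R Phat) ** R ** gain A B R Phat)
            - (q - qhat) *\<^sub>R (transpose A ** Phat ** B ** matrix_inv (R + transpose B ** Phat ** B)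
                               ** transpose B ** Phat ** A) = Wm q qhat A B Q R Phat"
    by (simp add: Wm_def Gm_def)
  have lam_m: "\<And>i. lam i \<in> borel_measurable M"
    using lam_indep unfolding indep_vars_def2 by auto
  define K where "K = gain A B R Phat"
  define W where "W = Wm q qhat A B Q R Phat"
  define V where "V t = integral\<^sup>L M (\<lambda>w. traj A B K lam x0 t w \<bullet> (Phat *v traj A B K lam x0 t w))" for t
  define U where "U t = integral\<^sup>L M (\<lambda>w. traj A B K lam x0 t w \<bullet> (W *v traj A B K lam x0 t w))" for t
  define N where "N t = integral\<^sup>L M (\<lambda>w. traj A B K lam x0 t w \<bullet> traj A B K lam x0 t w)" for t
  have quadI: "\<And>Z t. integrable M (\<lambda>w. traj A B K lam x0 t w \<bullet> (Z *v traj A B K lam x0 t w))"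
    by (rule traj_quad_integrable[OF lam_val lam_m x0_meas x0_var])
  have NI: "\<And>t. integrable M (\<lambda>w. traj A B K lam x0 t w \<bullet> traj A B K lam x0 t w)"
  proof -
    fix t
    have "integrable M (\<lambda>w. traj A B K lam x0 t w \<bullet> (mat 1 *v traj A B K lam x0 t w))"
      by (rule traj_quad_integrable[OF lam_val lam_m x0_meas x0_var])
    then show "integrable M (\<lambda>w. traj A B K lam x0 t w \<bullet> traj A B K lam x0 t w)"
      by (simp add: matrix_vector_mul_lid)
  qed
  have step: "V (Suc t) = V t - U t" for t
    unfolding V_def U_def K_def W_def
    by (rule mss_step[OF R Phat prob x0_meas x0_var lam_val lam_indep lam_dist x0_indep])
  show ?thesis
  proof (intro conjI impI)
    assume "q \<le> qhat"
    then show "posdef (Q + (1 - q) *\<^sub>R (transpose (gain A B R Phat) ** R ** gain A B R Phat)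
            - (q - qhat) *\<^sub>R (transpose A ** Phat ** B ** matrix_inv (R + transpose B ** Phat ** B)
                               ** transpose B ** Phat ** A))"
      using part2[OF Phat(1) R Q _ q(2)] by blast
  next
    assume "posdef (Q + (1 - q) *\<^sub>R (transpose (gain A B R Phat) ** R ** gain A B R Phat)
            - (q - qhat) *\<^sub>R (transpose A ** Phat ** B ** matrix_inv (R + transpose B ** Phat ** B)
                               ** transpose B ** Phat ** A))"
    then have Wp: "posdef W" unfolding W_def Weq .
    from posdef_lb[OF Wp] obtain c where c: "c > 0" "\<And>x. c * (x \<bullet> x) \<le> x \<bullet> (W *v x)" by blast
    from posdef_lb[OF Phat(1)] obtain p where p: "p > 0" "\<And>x. p * (x \<bullet> x) \<le> x \<bullet> (Phat *v x)" by blast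
    from quad_ub[of Phat] obtain C where C: "C > 0" "\<And>x. \<bar>x \<bullet> (Phat *v x)\<bar> \<le> C * (x \<bullet> x)" by blast
    have C2: "x \<bullet> (Phat *v x) \<le> C * (x \<bullet> x)" for x by (rule abs_le_D1[OF C(2)])
    have N0: "0 \<le> N t" for t unfolding N_def
      by (rule Bochner_Integration.integral_nonneg) simp
    have UN: "c * N t \<le> U t" for t
    proof -
      have "c * N t = integral\<^sup>L M (\<lambda>w. c * (traj A B K lam x0 t w \<bullet> traj A B K lam x0 t w))"
        unfolding N_def by simp
      also have "\<dots> \<le> U t" unfolding U_def
        by (rule Bochner_Integration.integral_mono) (use NI quadI c(2) in auto)
      finally show ?thesis .
    qed
    have VN: "V t \<le> C * N t" for t
    proof -
      have "V t \<le> integral\<^sup>L M (\<lambda>w. C * (traj A B K lam x0 t w \<bullet> traj A B K lam x0 t w))"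
        unfolding V_def
        by (rule Bochner_Integration.integral_mono) (use NI quadI C2 in auto)
      also have "\<dots> = C * N t" unfolding N_def by simp
      finally show ?thesis .
    qed
    have NV: "p * N t \<le> V t" for t
    proof -
      have "p * N t = integral\<^sup>L M (\<lambda>w. p * (traj A B K lam x0 t w \<bullet> traj A B K lam x0 t w))"
        unfolding N_def by simp
      also have "\<dots> \<le> V t" unfolding V_def
        by (rule Bochner_Integration.integral_mono) (use NI quadI p(2) in auto)
      finally show ?thesis .
    qed
    have V0: "0 \<le> V t" for t using NV[of t] N0[of t] p(1) by (meson mult_nonneg_nonneg less_imp_le order_trans)
    define \<rho> where "\<rho> = max 0 (1 - c / C)"
    have \<rho>: "0 \<le> \<rho>" "\<rho> < 1" using c(1) C(1) by (auto simp: \<rho>_def)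
    have Vstep: "V (Suc t) \<le> \<rho> * V t" for t
    proof -
      have "C * N t \<ge> V t" by (rule VN)
      then have "N t \<ge> V t / C" using C(1) by (simp add: divide_le_eq mult.commute)
      then have "c * N t \<ge> c * (V t / C)" using c(1) by (intro mult_left_mono) auto
      then have "V (Suc t) \<le> V t - c * (V t / C)" using step[of t] UN[of t] by simp
      also have "\<dots> = (1 - c / C) * V t" by (simp add: algebra_simps)
      also have "\<dots> \<le> \<rho> * V t" using V0[of t] by (intro mult_right_mono) (auto simp: \<rho>_def)
      finally show ?thesis .
    qed
    have Vpow: "V t \<le> \<rho> ^ t * V 0" for t
    proof (induction t)
      case 0 then show ?case by simp
    next
      case (Suc t)
      have "V (Suc t) \<le> \<rho> * V t" by (rule Vstep)
      also have "\<dots> \<le> \<rho> * (\<rho> ^ t * V 0)" using Suc \<rho>(1) by (intro mult_left_mono)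
      finally show ?case by (simp add: mult.assoc)
    qed
    have Nb: "N t \<le> \<rho> ^ t * (V 0 / p)" for t
    proof -
      have "p * N t \<le> \<rho> ^ t * V 0" using NV[of t] Vpow[of t] by linarith
      then show ?thesis using p(1) by (simp add: field_simps mult.commute)
    qed
    have lim: "(\<lambda>t. \<rho> ^ t * (V 0 / p)) \<longlonglongrightarrow> 0"
      by (intro tendsto_mult_left_zero LIMSEQ_realpow_zero \<rho>)
    have "N \<longlonglongrightarrow> 0"
      by (rule tendsto_sandwich[OF _ _ tendsto_const lim]) (use N0 Nb in auto)
    then show "(\<lambda>t. integral\<^sup>L M (\<lambda>w. traj A B (gain A B R Phat) lam x0 t w
                                   \<bullet> traj A B (gain A B R Phat) lam x0 t w)) \<longlonglongrightarrow> 0"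
      unfolding N_def K_def .
  qed
qed


end
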